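(* In type $A_r$, let $\theta$ be the highest root and, for $1 \le m \le r$, let $C_m = s_m s_{m+1} \cdots s_r\, s_{m-1} s_{m-2} \cdots s_1$ (so $C_1 = s_1 s_2\cdots s_r$ and $C_r = s_r s_{r-1}\cdots s_1$). Then $C_m(\theta) = -\alpha_m$ for each $m$, and for any Coxeter element $c$ of $W(A_r)$ (a product of all simple reflections, each exactly once, in some order), $c(\theta) > 0$ if and only if $c \notin \{C_1, \dots, C_r\}$.
   Context: Type $A_r$ is realized in $\mathbb{R}^{r+1}$ with orthonormal basis $e_1,\dots,e_{r+1}$, positive roots $e_i - e_j$ ($i<j$), simple roots $\alpha_i = e_i - e_{i+1}$, and $s_i$ swapping $e_i$ and $e_{i+1}$; the highest root is $\theta = e_1 - e_{r+1}$. Products of reflections act by composition (rightmost factor applied first). $\gamma>0$ means $\gamma$ is a positive root. *)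

theory Defs
  imports Main Complex_Main
begin

text \<open>Type A_r realised in R^(r+1): vectors are functions nat => real, where only the
coordinates 1..r+1 are relevant (e_i is the i-th standard basis vector).\<close>

definition e :: "nat \<Rightarrow> nat \<Rightarrow> real" where
  "e i = (\<lambda>k. if k = i then 1 else 0)"

definition s :: "nat \<Rightarrow> (nat \<Rightarrow> real) \<Rightarrow> (nat \<Rightarrow> real)" where
  "s i v = (\<lambda>k. if k = i then v (i+1) else if k = i+1 then v i else v k)"

text \<open>Product of simple reflections s_{i1} s_{i2} ... s_{ik}, acting by composition
(rightmost factor applied first).\<close>
definition refl_prod :: "nat list \<Rightarrow> (nat \<Rightarrow> real) \<Rightarrow> (nat \<Rightarrow> real)" where
  "refl_prod xs = foldr (\<lambda>i f. s i \<circ> f) xs id"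

definition simple_root :: "nat \<Rightarrow> nat \<Rightarrow> real" where
  "simple_root m = e m - e (m+1)"

definition highest_root :: "nat \<Rightarrow> nat \<Rightarrow> real" where
  "highest_root r = e 1 - e (r+1)"

definition positive_roots :: "nat \<Rightarrow> (nat \<Rightarrow> real) set" where
  "positive_roots r = {e i - e j | i j. 1 \<le> i \<and> i < j \<and> j \<le> r + 1}"

definition C :: "nat \<Rightarrow> nat \<Rightarrow> (nat \<Rightarrow> real) \<Rightarrow> (nat \<Rightarrow> real)" where
  "C r m = refl_prod ([m..<r+1] @ rev [1..<m])"

definition coxeter_word :: "nat \<Rightarrow> nat list \<Rightarrow> bool" where
  "coxeter_word r xs \<longleftrightarrow> distinct xs \<and> set xs = {1..r}"

end

theory Submission
  imports Defs
begin

fun bef :: "nat list \<Rightarrow> nat \<Rightarrow> nat \<Rightarrow> bool" where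
  "bef [] a b = False"
| "bef (x#xs) a b = ((x = a \<and> b \<in> set xs) \<or> bef xs a b)"

lemma bef_mem: "bef xs a b \<Longrightarrow> a \<in> set xs \<and> b \<in> set xs"
  by (induct xs) auto

lemma bef_append: "bef (xs @ ys) a b = (bef xs a b \<or> (a \<in> set xs \<and> b \<in> set ys) \<or> bef ys a b)"
  by (induct xs) (auto dest: bef_mem)

lemma bef_prefix: "distinct (us @ vs) \<Longrightarrow> b \<in> set us \<Longrightarrow> bef (us @ vs) a b \<Longrightarrow> bef us a b"
  by (auto simp: bef_append dest: bef_mem)

lemma bef_split: "distinct (us @ b # vs) \<Longrightarrow> bef (us @ b # vs) a b \<longleftrightarrow> a \<in> set us"
  by (auto simp: bef_append dest: bef_mem)

lemma bef_asym: "distinct xs \<Longrightarrow> bef xs a b \<Longrightarrow> \<not> bef xs b a"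
  by (induct xs) (auto dest: bef_mem)

lemma bef_total: "a \<noteq> b \<Longrightarrow> a \<in> set xs \<Longrightarrow> b \<in> set xs \<Longrightarrow> bef xs a b \<or> bef xs b a"
  by (induct xs) auto

lemma bef_snoc: "bef (xs @ [z]) x y = (bef xs x y \<or> (x \<in> set xs \<and> y = z))"
  by (simp add: bef_append)

lemma bef_upt: "bef [a..<b] x y \<longleftrightarrow> a \<le> x \<and> x < y \<and> y < b"
  by (induct b) (auto simp: bef_snoc dest: bef_mem)

lemma bef_rev: "bef (rev xs) a b \<longleftrightarrow> bef xs b a"
  by (induct xs) (auto simp: bef_snoc)

definition sg :: "nat \<Rightarrow> nat \<Rightarrow> nat" where
  "sg i k = (if k = i then i+1 else if k = i+1 then i else k)"

definition Q :: "nat list \<Rightarrow> nat \<Rightarrow> nat" where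
  "Q xs = foldr (\<lambda>i f. sg i \<circ> f) xs id"

lemma Q_Nil[simp]: "Q [] = id" by (simp add: Q_def)
lemma Q_Cons[simp]: "Q (x#xs) k = sg x (Q xs k)" by (simp add: Q_def)
lemma Q_append: "Q (xs @ ys) k = Q xs (Q ys k)" by (induct xs) auto

lemma Q_fix: "\<forall>x\<in>set xs. x \<noteq> k \<and> x + 1 \<noteq> k \<Longrightarrow> Q xs k = k"
  by (induct xs) (auto simp: sg_def)

lemma s_e: "s i (e j) = e (sg i j)"
  by (auto simp: s_def e_def sg_def fun_eq_iff)

lemma s_diff: "s i (u - v) = s i u - s i v"
  by (auto simp: s_def fun_eq_iff)

lemma rp_Cons[simp]: "refl_prod (x#xs) = s x \<circ> refl_prod xs"
  by (simp add: refl_prod_def)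
lemma rp_Nil[simp]: "refl_prod [] = id"
  by (simp add: refl_prod_def)

lemma rp_e: "refl_prod xs (e k) = e (Q xs k)"
  by (induct xs) (auto simp: s_e)

lemma rp_diff: "refl_prod xs (u - v) = refl_prod xs u - refl_prod xs v"
  by (induct xs) (simp_all only: rp_Cons rp_Nil o_apply id_apply s_diff)

lemma rp_theta: "refl_prod xs (highest_root r) = e (Q xs 1) - e (Q xs (r+1))"
  by (simp add: highest_root_def rp_diff rp_e)

lemma s_comm: "a \<noteq> y \<Longrightarrow> a \<noteq> y + 1 \<Longrightarrow> a + 1 \<noteq> y \<Longrightarrow> s a (s y v) = s y (s a v)"
  by (auto simp: s_def fun_eq_iff)

lemma rp_move: "\<forall>a\<in>set as. a \<noteq> y \<and> a \<noteq> y + 1 \<and> a + 1 \<noteq> y \<Longrightarrow>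
   refl_prod (as @ y # bs) = refl_prod (y # as @ bs)"
proof (induct as)
  case Nil then show ?case by simp
next
  case (Cons a as)
  then have IH: "refl_prod (as @ y # bs) = s y \<circ> refl_prod (as @ bs)" by (simp add: comp_def)
  show ?case using Cons(2) by (simp add: IH fun_eq_iff s_comm)
qed

lemma sort_lemma:
  "distinct xs \<Longrightarrow> distinct ys \<Longrightarrow> set xs = set ys \<Longrightarrow>
   (\<forall>a b. a \<in> set xs \<longrightarrow> b \<in> set xs \<longrightarrow> b = a + 1 \<longrightarrow> (bef xs a b \<longleftrightarrow> bef ys a b)) \<Longrightarrow>
   refl_prod xs = refl_prod ys"
proof (induct ys arbitrary: xs)
  case Nil then show ?case by simp
next
  case (Cons y ys xs)
  have "y \<in> set xs" using Cons by auto
  then obtain as bs where xs: "xs = as @ y # bs" by (meson split_list)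
  have nadj: "\<forall>a\<in>set as. a \<noteq> y \<and> a \<noteq> y + 1 \<and> a + 1 \<noteq> y"
  proof
    fix a assume a: "a \<in> set as"
    have "a \<noteq> y" using a Cons(2) xs by auto
    moreover have "a \<noteq> y + 1"
    proof
      assume "a = y + 1"
      moreover have "y \<in> set xs" "a \<in> set xs" using xs a by auto
      ultimately have "bef xs y a \<longleftrightarrow> bef (y#ys) y a" by (intro Cons(5)[rule_format]) simp_all
      moreover have "bef (y#ys) y a" using \<open>a \<noteq> y\<close> a xs Cons(4) by auto
      moreover have "\<not> bef xs y a"
      proof -
        have "bef xs a y" using a xs by (simp add: bef_append)
        then show ?thesis using bef_asym[OF Cons(2)] by blast
      qed
      ultimately show False by simp
    qed
    moreover have "a + 1 \<noteq> y"
    proof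
      assume "a + 1 = y"
      moreover have "y \<in> set xs" "a \<in> set xs" using xs a by auto
      ultimately have "bef xs a y \<longleftrightarrow> bef (y#ys) a y" by (intro Cons(5)[rule_format]) (simp_all only: eq_commute)
      moreover have "\<not> bef (y#ys) a y" using \<open>a \<noteq> y\<close> Cons(3) bef_mem[of ys a y] by auto
      moreover have "bef xs a y" using a xs by (simp add: bef_append)
      ultimately show False by simp
    qed
    ultimately show "a \<noteq> y \<and> a \<noteq> y + 1 \<and> a + 1 \<noteq> y" by simp
  qed
  have "refl_prod (as @ bs) = refl_prod ys"
  proof (rule Cons(1))
    show "distinct (as @ bs)" using Cons(2) xs by auto
    show "distinct ys" using Cons(3) by auto
    show "set (as @ bs) = set ys" using Cons(2,3,4) xs by auto
    show "\<forall>a b. a \<in> set (as @ bs) \<longrightarrow> b \<in> set (as @ bs) \<longrightarrow> b = a + 1 \<longrightarrow> bef (as @ bs) a b = bef ys a b"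
    proof (intro allI impI)
      fix a b assume h: "a \<in> set (as @ bs)" "b \<in> set (as @ bs)" "b = a + 1"
      have ny: "a \<noteq> y" "b \<noteq> y" using h Cons(2) xs by auto
      have "a \<in> set xs" "b \<in> set xs" using xs h by auto
      then have "bef xs a b = bef (y#ys) a b" using Cons(5)[rule_format, of a b] h(3) by simp
      moreover have "bef xs a b = bef (as @ bs) a b" using ny xs by (simp add: bef_append)
      moreover have "bef (y#ys) a b = bef ys a b" using ny by simp
      ultimately show "bef (as @ bs) a b = bef ys a b" by simp
    qed
  qed
  then show ?case using xs rp_move[OF nadj, of bs] by simp
qed

lemma upc:
  "distinct xs \<Longrightarrow> (\<forall>x\<in>set xs. x + 1 \<noteq> k) \<Longrightarrow> k + n \<in> set xs \<Longrightarrow>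
   (\<forall>l. k \<le> l \<and> l < k + n \<longrightarrow> bef xs (l+1) l) \<Longrightarrow>
   k + n + 1 \<notin> set (takeWhile (\<lambda>x. x \<noteq> k + n) xs) \<Longrightarrow> Q xs k = k + n + 1"
proof (induct n arbitrary: k xs)
  case 0
  then have "k \<in> set xs" by simp
  then obtain us vs where xs: "xs = us @ k # vs" and ku: "k \<notin> set us"
    by (metis split_list_first)
  have tw: "takeWhile (\<lambda>x. x \<noteq> k) xs = us" using ku unfolding xs by (induct us) auto
  have "Q vs k = k" using 0(1,2) xs by (intro Q_fix) auto
  then have "Q xs k = Q us (k+1)" using xs by (simp add: Q_append sg_def)
  also have "\<dots> = k + 1" using 0(5) tw ku by (intro Q_fix) auto
  finally show ?case by simp
next
  case (Suc n)
  have "bef xs (k+1) k" using Suc(5) by auto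
  then have "k \<in> set xs" using bef_mem by blast
  then obtain us vs where xs: "xs = us @ k # vs" and ku: "k \<notin> set us"
    by (metis split_list_first)
  have "Q vs k = k" using Suc(2,3) xs by (intro Q_fix) auto
  then have Qx: "Q xs k = Q us (k+1)" using xs by (simp add: Q_append sg_def)
  have mem: "\<forall>d<Suc n. k + Suc d \<in> set us"
  proof (intro allI impI)
    fix d assume "d < Suc n"
    then show "k + Suc d \<in> set us"
    proof (induct d)
      case 0
      have "bef xs (k+1) k" using Suc(5) by auto
      then show ?case using bef_split[of us k vs "k+1"] Suc(2) xs by simp
    next
      case (Suc d)
      then have m: "k + Suc d \<in> set us" by simp
      have "bef xs (k + Suc d + 1) (k + Suc d)" using Suc.prems Suc.hyps \<open>Suc d < Suc n\<close>
        using \<open>\<forall>l. k \<le> l \<and> l < k + Suc n \<longrightarrow> bef xs (l + 1) l\<close> by auto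
      then have "bef us (k + Suc d + 1) (k + Suc d)" using bef_prefix[of us "k#vs"] m xs \<open>distinct xs\<close> by simp
      then show ?case using bef_mem by simp
    qed
  qed
  have "Q us (k+1) = (k+1) + n + 1"
  proof (rule Suc(1))
    show "distinct us" using Suc(2) xs by simp
    show "\<forall>x\<in>set us. x + 1 \<noteq> k + 1" using ku by auto
    show "k + 1 + n \<in> set us" using mem[rule_format, of n] by simp
    show "\<forall>l. k + 1 \<le> l \<and> l < k + 1 + n \<longrightarrow> bef us (l + 1) l"
    proof (intro allI impI)
      fix l assume l: "k + 1 \<le> l \<and> l < k + 1 + n"
      then have "bef xs (l+1) l" using Suc(5) by auto
      moreover have "l \<in> set us"
      proof -
        have "k + Suc (l - k - 1) \<in> set us" by (rule mem[rule_format]) (use l in arith)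
        moreover have "k + Suc (l - k - 1) = l" using l by simp
        ultimately show ?thesis by simp
      qed
      ultimately show "bef us (l+1) l" using bef_prefix[of us "k#vs"] xs Suc(2) by simp
    qed
    have "k + Suc n \<in> set us" using mem[rule_format, of n] by simp
    then have "takeWhile (\<lambda>x. x \<noteq> k + Suc n) xs = takeWhile (\<lambda>x. x \<noteq> k + Suc n) us"
      using xs by (simp add: takeWhile_append1)
    then show "k + 1 + n + 1 \<notin> set (takeWhile (\<lambda>x. x \<noteq> k + 1 + n) us)" using Suc(6) by simp
  qed
  then show ?case using Qx by simp
qed

lemma dnc:
  "distinct xs \<Longrightarrow> k + n + 1 \<notin> set xs \<Longrightarrow> k + n \<in> set xs \<Longrightarrow>
   (\<forall>l. k \<le> l \<and> l < k + n \<longrightarrow> bef xs l (l+1)) \<Longrightarrow>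
   (\<forall>x\<in>set (takeWhile (\<lambda>x. x \<noteq> k) xs). x + 1 \<noteq> k) \<Longrightarrow> Q xs (k + n + 1) = k"
proof (induct n arbitrary: xs)
  case 0
  then have "k \<in> set xs" by simp
  then obtain us vs where xs: "xs = us @ k # vs" and ku: "k \<notin> set us"
    by (metis split_list_first)
  have tw: "takeWhile (\<lambda>x. x \<noteq> k) xs = us" using ku unfolding xs by (induct us) auto
  have "Q vs (k+1) = k+1" using 0(1,2) xs by (intro Q_fix) auto
  then have "Q xs (k+1) = Q us k" using xs by (simp add: Q_append sg_def)
  also have "\<dots> = k" using 0(5) tw ku by (intro Q_fix) auto
  finally show ?case by simp
next
  case (Suc n)
  obtain us vs where xs: "xs = us @ (k + Suc n) # vs" and ku: "k + Suc n \<notin> set us"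
    using Suc(4) by (metis split_list_first)
  have "Q vs (k + Suc n + 1) = k + Suc n + 1" using Suc(2,3) xs by (intro Q_fix) auto
  then have Qx: "Q xs (k + Suc n + 1) = Q us (k + n + 1)" using xs by (simp add: Q_append sg_def)
  have mem: "\<forall>d\<le>n. k + (n - d) \<in> set us"
  proof (intro allI impI)
    fix d assume "d \<le> n"
    then show "k + (n - d) \<in> set us"
    proof (induct d)
      case 0
      have "bef xs (k+n) (k + Suc n)" using Suc(5) by auto
      then show ?case using bef_split[of us "k + Suc n" vs "k+n"] Suc(2) xs by simp
    next
      case (Suc d)
      then have m: "k + (n - d) \<in> set us" by simp
      have b: "bef xs (k + (n - Suc d)) (k + (n - d))"
      proof -
        have "bef xs (k + (n - Suc d)) (k + (n - Suc d) + 1)"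
          by (rule \<open>\<forall>l. k \<le> l \<and> l < k + Suc n \<longrightarrow> bef xs l (l + 1)\<close>[rule_format])
            (use \<open>Suc d \<le> n\<close> in arith)
        moreover have "k + (n - Suc d) + 1 = k + (n - d)" using \<open>Suc d \<le> n\<close> by simp
        ultimately show ?thesis by metis
      qed
      have dd: "distinct (us @ (k + Suc n) # vs)" using xs \<open>distinct xs\<close> by simp
      have "bef us (k + (n - Suc d)) (k + (n - d))"
        using bef_prefix[OF dd m] b xs by simp
      then show ?case using bef_mem by simp
    qed
  qed
  have "Q us (k + n + 1) = k"
  proof (rule Suc(1))
    show "distinct us" using Suc(2) xs by simp
    show "k + n + 1 \<notin> set us" using ku by simp
    show "k + n \<in> set us" using mem[rule_format, of 0] by simp
    show "\<forall>l. k \<le> l \<and> l < k + n \<longrightarrow> bef us l (l + 1)"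
    proof (intro allI impI)
      fix l assume l: "k \<le> l \<and> l < k + n"
      then have "bef xs l (l+1)" using Suc(5) by auto
      moreover have "l + 1 \<in> set us"
      proof -
        have "k + (n - (n - (l + 1 - k))) \<in> set us" by (rule mem[rule_format]) simp
        moreover have "k + (n - (n - (l + 1 - k))) = l + 1" using l by arith
        ultimately show ?thesis by metis
      qed
      ultimately show "bef us l (l+1)" using bef_prefix[of us "(k + Suc n)#vs"] xs Suc(2) by simp
    qed
    have "k \<in> set us" using mem[rule_format, of n] by simp
    then have "takeWhile (\<lambda>x. x \<noteq> k) xs = takeWhile (\<lambda>x. x \<noteq> k) us"
      using xs by (simp add: takeWhile_append1)
    then show "\<forall>x\<in>set (takeWhile (\<lambda>x. x \<noteq> k) us). x + 1 \<noteq> k" using Suc(6) by simp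
  qed
  then show ?case using Qx by simp
qed

lemma tw_bef: "distinct xs \<Longrightarrow> bef xs a b \<Longrightarrow> b \<notin> set (takeWhile (\<lambda>x. x \<noteq> a) xs)"
  by (induct xs) (auto dest: bef_mem)

lemma e_diff_eq: assumes "a \<noteq> b" "e a - e b = e c - e d" shows "a = c \<and> b = d"
proof -
  have 1: "(e a - e b) a = (e c - e d) a" and 2: "(e a - e b) b = (e c - e d) b" using assms(2) by simp_all
  from 1 assms(1) have "c = a \<and> d \<noteq> a" by (auto simp: e_def split: if_splits)
  moreover from 2 assms(1) have "d = b" by (auto simp: e_def split: if_splits)
  ultimately show ?thesis by simp
qed

lemma not_pos: "e (m+1) - e m \<notin> positive_roots r"
proof
  assume "e (m+1) - e m \<in> positive_roots r"
  then obtain i j where "e (m+1) - e m = e i - e j" "i < j" by (auto simp: positive_roots_def)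
  with e_diff_eq[of "m+1" m i j] show False by simp
qed

lemma pos: "1 \<le> a \<Longrightarrow> a < b \<Longrightarrow> b \<le> r+1 \<Longrightarrow> e a - e b \<in> positive_roots r"
  by (auto simp: positive_roots_def)

lemma cw_bef: "1 \<le> m \<Longrightarrow> 1 \<le> a \<Longrightarrow> a + 1 \<le> r \<Longrightarrow>
   bef ([m..<r+1] @ rev [1..<m]) a (a+1) \<longleftrightarrow> m \<le> a"
  by (auto simp: bef_append bef_rev bef_upt)

lemma cw_bef2: "1 \<le> m \<Longrightarrow> 1 \<le> a \<Longrightarrow> a + 1 \<le> r \<Longrightarrow> m \<le> r \<Longrightarrow>
   bef ([m..<r+1] @ rev [1..<m]) (a+1) a \<longleftrightarrow> a < m"
  by (auto simp: bef_append bef_rev bef_upt)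

lemma cw_distinct: "distinct ([m..<r+1] @ rev [1..<m])" by auto
lemma cw_set: "1 \<le> m \<Longrightarrow> m \<le> r \<Longrightarrow> set ([m..<r+1] @ rev [1..<m]) = {1..r}" by auto

lemma part1:
  assumes m: "1 \<le> m" "m \<le> r"
  shows "C r m (highest_root r) = - simple_root m"
proof -
  define cw where "cw = [m..<r+1] @ rev [1..<m]"
  have dcw: "distinct cw" unfolding cw_def by auto
  have scw: "set cw = {1..r}" unfolding cw_def using m by auto
  have "[m..<r+1] = m # [m+1..<r+1]" using upt_conv_Cons[of m "r+1"] m by simp
  then have tw: "takeWhile (\<lambda>x. x \<noteq> m) cw = []" unfolding cw_def by (simp only: append_Cons takeWhile.simps) simp
  have q1: "Q cw 1 = 1 + (m - 1) + 1"
  proof (rule upc)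
    show "distinct cw" by (rule dcw)
    show "\<forall>x\<in>set cw. x + 1 \<noteq> 1" using scw by auto
    show "1 + (m - 1) \<in> set cw" using scw m by auto
    show "\<forall>l. 1 \<le> l \<and> l < 1 + (m - 1) \<longrightarrow> bef cw (l + 1) l"
    proof (intro allI impI)
      fix l assume l: "1 \<le> l \<and> l < 1 + (m - 1)"
      then show "bef cw (l + 1) l" unfolding cw_def using cw_bef2[of m l r] m by simp
    qed
    show "1 + (m - 1) + 1 \<notin> set (takeWhile (\<lambda>x. x \<noteq> 1 + (m - 1)) cw)" using tw m by simp
  qed
  have q2: "Q cw (m + (r - m) + 1) = m"
  proof (rule dnc)
    show "distinct cw" by (rule dcw)
    show "m + (r - m) + 1 \<notin> set cw" using scw m by auto
    show "m + (r - m) \<in> set cw" using scw m by auto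
    show "\<forall>l. m \<le> l \<and> l < m + (r - m) \<longrightarrow> bef cw l (l + 1)"
    proof (intro allI impI)
      fix l assume l: "m \<le> l \<and> l < m + (r - m)"
      then show "bef cw l (l + 1)" unfolding cw_def using cw_bef[of m l r] m by simp
    qed
    show "\<forall>x\<in>set (takeWhile (\<lambda>x. x \<noteq> m) cw). x + 1 \<noteq> m" using tw by simp
  qed
  have "C r m (highest_root r) = e (m+1) - e m"
  proof -
    have "C r m = refl_prod cw" by (simp add: C_def cw_def)
    then have "C r m (highest_root r) = e (Q cw 1) - e (Q cw (r+1))" by (simp only: rp_theta)
    then show ?thesis using q1 q2 m by simp
  qed
  also have "\<dots> = - simple_root m" by (simp add: simple_root_def fun_eq_iff)
  finally show ?thesis .
qed

lemma part2:
  assumes r: "1 \<le> r" and cox: "coxeter_word r xs"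
  shows "refl_prod xs (highest_root r) \<in> positive_roots r \<longleftrightarrow>
             refl_prod xs \<notin> {C r m | m. m \<in> {1..r}}"
proof
  assume p: "refl_prod xs (highest_root r) \<in> positive_roots r"
  show "refl_prod xs \<notin> {C r m | m. m \<in> {1..r}}"
  proof
    assume "refl_prod xs \<in> {C r m | m. m \<in> {1..r}}"
    then obtain m where m: "1 \<le> m" "m \<le> r" "refl_prod xs = C r m" by auto
    have md: "- (e m - e (m+1)) = e (m+1) - e m" by (simp add: fun_eq_iff)
    have "refl_prod xs (highest_root r) = e (m+1) - e m"
      using part1[OF m(1,2)] m(3) unfolding simple_root_def md by simp
    then show False using p not_pos by simp
  qed
next
  assume nc: "refl_prod xs \<notin> {C r m | m. m \<in> {1..r}}"
  have dx: "distinct xs" and sx: "set xs = {1..r}" using cox by (auto simp: coxeter_word_def)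
  define D where "D l = bef xs (l+1) l" for l
  have Dn: "\<not> D l \<longleftrightarrow> bef xs l (l+1)" if "1 \<le> l" "l < r" for l
  proof -
    have "l \<in> set xs" "l + 1 \<in> set xs" using sx that by auto
    then have "bef xs l (l+1) \<or> bef xs (l+1) l" using bef_total[of l "l+1" xs] by simp
    then show ?thesis using bef_asym[OF dx, of l "l+1"] unfolding D_def by blast
  qed
  show "refl_prod xs (highest_root r) \<in> positive_roots r"
  proof (cases "\<forall>l l'. 1 \<le> l \<longrightarrow> l < l' \<longrightarrow> l' < r \<longrightarrow> D l' \<longrightarrow> D l")
    case True
    define m where "m = (LEAST l. 1 \<le> l \<and> (l = r \<or> \<not> D l))"
    have mP: "1 \<le> m \<and> (m = r \<or> \<not> D m)" unfolding m_def by (rule LeastI[of _ r]) (use r in simp)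
    have mle: "m \<le> r" unfolding m_def by (rule Least_le) (use r in simp)
    have below: "D a" if "1 \<le> a" "a < m" for a
      using not_less_Least[of a "\<lambda>l. 1 \<le> l \<and> (l = r \<or> \<not> D l)"] that mle
      unfolding m_def[symmetric] by auto
    have above: "\<not> D a" if "m \<le> a" "a < r" for a
    proof
      assume "D a"
      have "m \<noteq> r" using that by simp
      then have "\<not> D m" using mP by simp
      moreover have "m < a \<longrightarrow> D m"
      proof
        assume "m < a"
        moreover have "1 \<le> m" using mP by simp
        ultimately show "D m" using True[rule_format, of m a] \<open>D a\<close> that(2) by blast
      qed
      moreover have "m = a \<or> m < a" using that by auto
      ultimately show False using \<open>D a\<close> by auto
    qed
    have m1: "1 \<le> m" using mP by simp
    have "refl_prod xs = refl_prod ([m..<r+1] @ rev [1..<m])"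
    proof (rule sort_lemma)
      show "distinct xs" by (rule dx)
      show "distinct ([m..<r+1] @ rev [1..<m])" by (rule cw_distinct)
      show "set xs = set ([m..<r+1] @ rev [1..<m])" using sx cw_set[OF m1 mle] by simp
      show "\<forall>a b. a \<in> set xs \<longrightarrow> b \<in> set xs \<longrightarrow> b = a + 1 \<longrightarrow>
          bef xs a b = bef ([m..<r+1] @ rev [1..<m]) a b"
      proof (intro allI impI)
        fix a b assume h: "a \<in> set xs" "b \<in> set xs" "b = a + 1"
        then have a: "1 \<le> a" "a + 1 \<le> r" using sx by auto
        have "bef ([m..<r+1] @ rev [1..<m]) a (a+1) \<longleftrightarrow> m \<le> a"
          using cw_bef[of m a r] a m1 by simp
        moreover have "bef xs a (a+1) \<longleftrightarrow> m \<le> a"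
          using Dn[of a] a below[of a] above[of a] by (cases "m \<le> a") auto
        ultimately show "bef xs a b = bef ([m..<r+1] @ rev [1..<m]) a b" using h by simp
      qed
    qed
    then have "refl_prod xs = C r m" by (simp add: C_def)
    then have "refl_prod xs \<in> {C r m | m. m \<in> {1..r}}" using m1 mle by auto
    with nc have False by blast
    then show ?thesis ..
  next
    case False
    then obtain l l' where ll: "1 \<le> l" "l < l'" "l' < r" "D l'" "\<not> D l" by blast
    define i where "i = (LEAST i. 1 \<le> i \<and> i < r \<and> \<not> D i)"
    have iP: "1 \<le> i \<and> i < r \<and> \<not> D i" unfolding i_def by (rule LeastI[of _ l]) (use ll in simp)
    have il: "i \<le> l" unfolding i_def by (rule Least_le) (use ll in simp)
    have ibelow: "D a" if "1 \<le> a" "a < i" for a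
      using not_less_Least[of a "\<lambda>i. 1 \<le> i \<and> i < r \<and> \<not> D i"] that iP
      unfolding i_def[symmetric] by auto
    define j where "j = (GREATEST j. j < r \<and> D j)"
    have jP: "j < r \<and> D j" unfolding j_def by (rule GreatestI_nat[of _ l' r]) (use ll in auto)
    have jl: "l' \<le> j" unfolding j_def by (rule Greatest_le_nat[of _ l' r]) (use ll in auto)
    have jabove: "\<not> D a" if "j < a" "a < r" for a
    proof
      assume "D a"
      then have "a \<le> j" unfolding j_def by (intro Greatest_le_nat[of _ a r]) (use that in auto)
      with that show False by simp
    qed
    have q1: "Q xs 1 = 1 + (i - 1) + 1"
    proof (rule upc)
      show "distinct xs" by (rule dx)
      show "\<forall>x\<in>set xs. x + 1 \<noteq> 1" using sx by auto
      show "1 + (i - 1) \<in> set xs" using sx iP by auto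
      show "\<forall>l. 1 \<le> l \<and> l < 1 + (i - 1) \<longrightarrow> bef xs (l + 1) l"
        using ibelow iP unfolding D_def by auto
      have "bef xs i (i+1)" using Dn[of i] iP by simp
      then show "1 + (i - 1) + 1 \<notin> set (takeWhile (\<lambda>x. x \<noteq> 1 + (i - 1)) xs)"
        using tw_bef[OF dx] iP by simp
    qed
    have q2: "Q xs ((j+1) + (r - j - 1) + 1) = j + 1"
    proof (rule dnc)
      show "distinct xs" by (rule dx)
      show "j + 1 + (r - j - 1) + 1 \<notin> set xs" using sx jP by auto
      show "j + 1 + (r - j - 1) \<in> set xs" using sx jP by auto
      show "\<forall>l. j + 1 \<le> l \<and> l < j + 1 + (r - j - 1) \<longrightarrow> bef xs l (l + 1)"
      proof (intro allI impI)
        fix a assume "j + 1 \<le> a \<and> a < j + 1 + (r - j - 1)"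
        then have "j < a" "a < r" "1 \<le> a" by auto
        then show "bef xs a (a+1)" using jabove Dn by blast
      qed
      have "bef xs (j+1) j" using jP unfolding D_def by simp
      then have "j \<notin> set (takeWhile (\<lambda>x. x \<noteq> j + 1) xs)" using tw_bef[OF dx] by blast
      then show "\<forall>x\<in>set (takeWhile (\<lambda>x. x \<noteq> j + 1) xs). x + 1 \<noteq> j + 1" by auto
    qed
    have "refl_prod xs (highest_root r) = e (i+1) - e (j+1)"
      using q1 q2 iP jP by (simp add: rp_theta)
    moreover have "e (i+1) - e (j+1) \<in> positive_roots r"
      using iP jP il ll jl by (intro pos) auto
    ultimately show ?thesis by simp
  qed
qed

theorem lemma4:
  fixes r :: nat
  assumes "1 \<le> r"
  shows "(\<forall>m\<in>{1..r}. C r m (highest_root r) = - simple_root m) \<and>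
         (\<forall>xs. coxeter_word r xs \<longrightarrow>
            (refl_prod xs (highest_root r) \<in> positive_roots r \<longleftrightarrow>
             refl_prod xs \<notin> {C r m | m. m \<in> {1..r}}))"
  using part1 part2[OF assms] by auto

end
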